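(* Let $n\ge 2$ and $v\in A_n$. Then $$\ell_{T(A_n)}(v)=\begin{cases} n-\mathrm{cyc}(v) & \text{if } 1,2 \text{ are in different cycles of } v,\\ n-\mathrm{cyc}(v)-1 & \text{if } 1,2 \text{ are in the same cycle of } v.\end{cases}$$
   Context: $A_n$ is the alternating group on $\{1,\dots,n\}$, $T(A_n)=\{(1\,2)(i\,j)\mid 1\le i<j\le n\}$, and $\ell_{T(A_n)}(v)=\min\{k\ge 0\mid v=t_1\cdots t_k,\ t_i\in T(A_n)\}$. $\mathrm{cyc}(v)$ is the number of cycles of $v$ in its disjoint cycle decomposition, fixed points counted. *)

theory Defs
  imports "HOL-Combinatorics.Combinatorics"
begin

definition alt_group :: "nat \<Rightarrow> (nat \<Rightarrow> nat) set" where
  "alt_group n = {p. p permutes {1..n} \<and> evenperm p}"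

definition T_alt :: "nat \<Rightarrow> (nat \<Rightarrow> nat) set" where
  "T_alt n = {transpose 1 2 \<circ> transpose i j | i j. 1 \<le> i \<and> i < j \<and> j \<le> n}"

definition len_T :: "nat \<Rightarrow> (nat \<Rightarrow> nat) \<Rightarrow> nat" where
  "len_T n v = (LEAST k. \<exists>ts. length ts = k \<and> set ts \<subseteq> T_alt n \<and> v = foldr (\<circ>) ts id)"

(* number of cycles of v on {1..n}, fixed points counted *)
definition cyc :: "nat \<Rightarrow> (nat \<Rightarrow> nat) \<Rightarrow> nat" where
  "cyc n v = card (orbit v ` {1..n})"

end

theory Submission imports Defs begin

lemma orb_sym: "permutation p \<Longrightarrow> y \<in> orbit p x \<Longrightarrow> x \<in> orbit p y"
  by (meson orbit_swap permutation_self_in_orbit)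

lemma orb_eq: "permutation p \<Longrightarrow> y \<in> orbit p x \<Longrightarrow> orbit p y = orbit p x"
  by (meson cyclic_on_orbit' orbit_cyclic_eq3)

lemma split_sep:
  assumes "permutation p" "a \<noteq> b" "b \<in> orbit p a"
  shows "b \<notin> orbit (transpose a b \<circ> p) a"
proof -
  define k where "k = funpow_dist p a b"
  have pk: "(p ^^ k) a = b" using funpow_dist_prop[OF assms(3)] k_def by simp
  have lt: "\<And>j. j < k \<Longrightarrow> (p ^^ j) a \<noteq> b" using funpow_dist_least k_def by metis
  have k0: "0 < k" using pk assms(2) by (cases k) auto
  let ?q = "transpose a b \<circ> p"
  define C where "C = {(p ^^ j) a | j. j < k}"
  have cl: "?q ((p ^^ j) a) \<in> C" if j: "j < k" for j
  proof (cases "Suc j = k")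
    case True
    then have "p ((p ^^ j) a) = b" using pk by (metis funpow.simps(2) comp_apply)
    then have "?q ((p ^^ j) a) = a" by simp
    then show ?thesis using k0 unfolding C_def by (auto intro!: exI[of _ 0])
  next
    case False
    then have j1: "Suc j < k" using j by simp
    have nb: "(p ^^ Suc j) a \<noteq> b" using lt j1 .
    have na: "(p ^^ Suc j) a \<noteq> a"
    proof
      assume h: "(p ^^ Suc j) a = a"
      have "(p ^^ (k - Suc j + Suc j)) a = (p ^^ (k - Suc j)) ((p ^^ Suc j) a)"
        by (simp only: funpow_add comp_apply)
      then have "(p ^^ (k - Suc j)) a = b" using h pk j1 by simp
      moreover have "k - Suc j < k" using j1 by simp
      ultimately show False using lt by blast
    qed
    have "?q ((p ^^ j) a) = (p ^^ Suc j) a" using na nb by simp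
    then show ?thesis using j1 unfolding C_def by blast
  qed
  have sub: "orbit ?q a \<subseteq> C"
  proof
    fix y assume "y \<in> orbit ?q a"
    then show "y \<in> C"
    proof induct
      case base show ?case using cl[of 0] k0 by simp
    next
      case (step y) then obtain j where "y = (p^^j) a" "j<k" by (auto simp: C_def)
      then show ?case using cl by simp
    qed
  qed
  show ?thesis using sub lt unfolding C_def by blast
qed

lemma merge_sub:
  assumes "permutation p" "a \<noteq> b" "b \<notin> orbit p a"
  shows "orbit p a \<subseteq> orbit (transpose a b \<circ> p) a \<and> b \<in> orbit (transpose a b \<circ> p) a"
proof -
  let ?q = "transpose a b \<circ> p"
  have pq: "permutation ?q" using assms(1) by (simp add: permutation_compose permutation_swap_id)
  have aa: "a \<in> orbit p a" using assms(1) permutation_self_in_orbit by metis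
  define m where "m = funpow_dist1 p a a"
  have pm: "(p ^^ m) a = a" using funpow_dist1_prop[OF aa] m_def by simp
  have least: "\<And>k. 0 < k \<Longrightarrow> k < m \<Longrightarrow> (p ^^ k) a \<noteq> a" using funpow_dist1_least m_def by metis
  have oe: "orbit p a = (\<lambda>n. (p ^^ n) a) ` {0..<m}" using orbit_conv_funpow_dist1[OF aa] m_def by simp
  have cl: "k < m \<Longrightarrow> (p ^^ k) a \<in> orbit ?q a" for k
  proof (induct k)
    case 0 have "a \<in> orbit ?q a" using permutation_self_in_orbit[OF pq] . then show ?case by (simp only: funpow_0)
  next
    case (Suc k)
    have "(p ^^ Suc k) a \<in> orbit p a" using funpow_in_orbit[OF aa] .
    then have nb: "(p ^^ Suc k) a \<noteq> b" using assms(3) by auto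
    have na: "(p ^^ Suc k) a \<noteq> a" using least Suc.prems by blast
    have "?q ((p ^^ k) a) = (p ^^ Suc k) a" using na nb by simp
    moreover have "(p ^^ k) a \<in> orbit ?q a" using Suc.hyps[OF Suc_lessD[OF Suc.prems]] .
    ultimately show ?case by (metis orbit.step)
  qed
  have m0: "0 < m" using m_def by simp
  then obtain m' where m': "m = Suc m'" by (cases m) auto
  have "?q ((p ^^ m') a) = b" using pm m' by simp
  moreover have "(p ^^ m') a \<in> orbit ?q a" using cl m' by simp
  ultimately have "b \<in> orbit ?q a" by (metis orbit.step)
  then show ?thesis using cl oe by auto
qed

lemma merge_orbit:
  assumes "permutation p" "a \<noteq> b" "b \<notin> orbit p a"
  shows "orbit (transpose a b \<circ> p) y =
    (if y \<in> orbit p a \<union> orbit p b then orbit p a \<union> orbit p b else orbit p y)"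
proof -
  let ?q = "transpose a b \<circ> p"
  let ?U = "orbit p a \<union> orbit p b"
  have pq: "permutation ?q" using assms(1) by (simp add: permutation_compose permutation_swap_id)
  have ab: "a \<notin> orbit p b" using orb_sym assms by metis
  have h1: "orbit p a \<subseteq> orbit ?q a" "b \<in> orbit ?q a" using merge_sub[OF assms] by auto
  have h2: "orbit p b \<subseteq> orbit (transpose b a \<circ> p) b" using merge_sub[of p b a] assms(1,2) ab by auto
  have tc: "transpose b a = transpose a b" by (rule transpose_commute)
  have qb: "orbit ?q b = orbit ?q a" using orb_eq[OF pq] h1 by blast
  have sup: "?U \<subseteq> orbit ?q a" using h1 h2 tc qb by auto
  have aU: "a \<in> ?U" "b \<in> ?U" using permutation_self_in_orbit[OF assms(1)] by auto
  have trU: "transpose a b z \<in> ?U" if "z \<in> ?U" for z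
    using that aU by (cases "z = a"; cases "z = b") auto
  have pU: "p z \<in> ?U" if "z \<in> ?U" for z
    using that by (auto intro: orbit.step)
  have subq: "orbit ?q a \<subseteq> ?U"
  proof
    fix y assume "y \<in> orbit ?q a"
    then show "y \<in> ?U"
    proof induct
      case base
      have "p a \<in> ?U" by (auto intro: orbit.base)
      then show ?case using trU by simp
    next
      case (step y)
      then show ?case using trU pU by simp
    qed
  qed
  have qa: "orbit ?q a = ?U" using sup subq by blast
  show ?thesis
  proof (cases "y \<in> ?U")
    case True
    then have "orbit ?q y = orbit ?q a" using qa orb_eq[OF pq] by blast
    then show ?thesis using True qa by simp
  next
    case False
    have "orbit ?q y = orbit p y"
    proof (rule orbit_cong)
      show "y \<in> orbit p y" using assms(1) permutation_self_in_orbit by metis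
      fix s assume s: "s \<in> orbit p y"
      have ps: "p s \<in> orbit p y" using s by (rule orbit.step)
      have "p s \<noteq> a" using ps False orb_sym[OF assms(1)] by blast
      moreover have "p s \<noteq> b" using ps False orb_sym[OF assms(1)] by blast
      ultimately show "?q s = p s" by simp
    qed
    then show ?thesis using False by simp
  qed
qed

lemma merge_card:
  assumes "p permutes S" "finite S" "a \<in> S" "b \<in> S" "a \<noteq> b" "b \<notin> orbit p a"
  shows "card (orbit (transpose a b \<circ> p) ` S) + 1 = card (orbit p ` S)"
proof -
  have pp: "permutation p" using assms(1,2) permutation_permutes by blast
  let ?q = "transpose a b \<circ> p"
  let ?U = "orbit p a \<union> orbit p b"
  note fo = merge_orbit[OF pp assms(5,6)]
  have self: "\<And>x. x \<in> orbit p x" using pp permutation_self_in_orbit by metis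
  have ab: "a \<notin> orbit p b" using orb_sym pp assms by metis
  have e1: "orbit ?q ` S = insert ?U (orbit p ` (S - ?U))"
  proof
    show "orbit ?q ` S \<subseteq> insert ?U (orbit p ` (S - ?U))" using fo by auto
    have "?U \<in> orbit ?q ` S" using fo assms(3) self by (metis UnI1 imageI)
    moreover have "orbit p ` (S - ?U) \<subseteq> orbit ?q ` S" using fo by force
    ultimately show "insert ?U (orbit p ` (S - ?U)) \<subseteq> orbit ?q ` S" by blast
  qed
  have e2: "orbit p ` S = insert (orbit p a) (insert (orbit p b) (orbit p ` (S - ?U)))"
  proof
    show "orbit p ` S \<subseteq> insert (orbit p a) (insert (orbit p b) (orbit p ` (S - ?U)))"
      using orb_eq[OF pp] by blast
    show "insert (orbit p a) (insert (orbit p b) (orbit p ` (S - ?U))) \<subseteq> orbit p ` S"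
      using assms(3,4) by blast
  qed
  have n1: "?U \<notin> orbit p ` (S - ?U)" using self by blast
  have n2: "orbit p a \<notin> orbit p ` (S - ?U)" using self by blast
  have n3: "orbit p b \<notin> orbit p ` (S - ?U)" using self by blast
  have n4: "orbit p a \<noteq> orbit p b" using self ab by metis
  have fin: "finite (orbit p ` (S - ?U))" using assms(2) by simp
  show ?thesis using e1 e2 n1 n2 n3 n4 fin by (simp add: card_insert_disjoint)
qed

lemma trans_step:
  assumes "p permutes S" "finite S" "a \<in> S" "b \<in> S" "a \<noteq> b"
  shows "(b \<notin> orbit p a \<and> card (orbit (transpose a b \<circ> p) ` S) + 1 = card (orbit p ` S)
           \<and> (\<forall>y. orbit p y \<subseteq> orbit (transpose a b \<circ> p) y) \<and> b \<in> orbit (transpose a b \<circ> p) a)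
       \<or> (b \<in> orbit p a \<and> card (orbit (transpose a b \<circ> p) ` S) = card (orbit p ` S) + 1
           \<and> (\<forall>y. orbit (transpose a b \<circ> p) y \<subseteq> orbit p y) \<and> b \<notin> orbit (transpose a b \<circ> p) a)"
proof (cases "b \<in> orbit p a")
  case False
  have pp: "permutation p" using assms(1,2) permutation_permutes by blast
  note fo = merge_orbit[OF pp assms(5) False]
  have self: "\<And>x. x \<in> orbit p x" using pp permutation_self_in_orbit by metis
  have "\<forall>y. orbit p y \<subseteq> orbit (transpose a b \<circ> p) y"
  proof
    fix y show "orbit p y \<subseteq> orbit (transpose a b \<circ> p) y"
      using fo[of y] orb_eq[OF pp] by (cases "y \<in> orbit p a \<union> orbit p b") auto
  qed
  moreover have "b \<in> orbit (transpose a b \<circ> p) a" using fo[of a] self by auto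
  ultimately show ?thesis using False merge_card[OF assms False] by blast
next
  case True
  let ?q = "transpose a b \<circ> p"
  have qS: "?q permutes S" using assms by (simp add: permutes_compose permutes_swap_id)
  have pp: "permutation p" using assms(1,2) permutation_permutes by blast
  have pq: "permutation ?q" using qS assms(2) permutation_permutes by blast
  have sep: "b \<notin> orbit ?q a" using split_sep[OF pp assms(5) True] .
  have bk: "transpose a b \<circ> ?q = p" by (simp add: o_assoc)
  have c: "card (orbit (transpose a b \<circ> ?q) ` S) + 1 = card (orbit ?q ` S)"
    using merge_card[OF qS assms(2-5) sep] .
  have self: "\<And>x. x \<in> orbit ?q x" using pq permutation_self_in_orbit by metis
  have "\<forall>y. orbit ?q y \<subseteq> orbit p y"
  proof
    fix y show "orbit ?q y \<subseteq> orbit p y"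
      using merge_orbit[OF pq assms(5) sep, of y] bk orb_eq[OF pq]
      by (cases "y \<in> orbit ?q a \<union> orbit ?q b") auto
  qed
  then show ?thesis using True sep c bk by auto
qed

definition Fv :: "nat \<Rightarrow> (nat \<Rightarrow> nat) \<Rightarrow> int" where
  "Fv n v = int n - int (cyc n v) - (if (2::nat) \<in> orbit v 1 then 1 else 0)"

lemma F_id: "Fv n id = 0"
proof -
  have o: "\<And>x. orbit id x = {x}" by (simp add: orbit_eq_singleton_iff)
  have oo: "orbit id = (\<lambda>x. {x})" using o by (rule ext)
  have "cyc n id = card ((\<lambda>x. {x}) ` {1..n})" unfolding cyc_def oo by simp
  also have "\<dots> = n" by (subst card_image) (auto simp: inj_on_def)
  moreover have "orbit id (1::nat) = {1}" by (rule o)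
  ultimately show ?thesis unfolding Fv_def by simp
qed

lemma cyc_bounds:
  assumes "v permutes {1..n}" "n \<ge> 2"
  shows "cyc n v \<le> n \<and> ((2::nat) \<in> orbit v 1 \<longrightarrow> cyc n v < n)"
proof -
  have fin: "finite {1..n}" by simp
  have pv: "permutation v" using assms(1) fin permutation_permutes by blast
  have le: "cyc n v \<le> n" unfolding cyc_def using card_image_le[OF fin, of "orbit v"] by simp
  moreover have "cyc n v < n" if r: "(2::nat) \<in> orbit v 1"
  proof -
    have "orbit v 2 = orbit v 1" using orb_eq[OF pv r] .
    moreover have "(1::nat) \<in> {1..n}" "(2::nat) \<in> {1..n}" using assms(2) by auto
    ultimately have "\<not> inj_on (orbit v) {1..n}" using inj_onD[of "orbit v" "{1..n}" 2 1] by auto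
    then have "cyc n v \<noteq> n" unfolding cyc_def using inj_on_iff_eq_card[OF fin, of "orbit v"] by simp
    then show ?thesis using le by simp
  qed
  ultimately show ?thesis by blast
qed

lemma F_nonneg:
  assumes "v permutes {1..n}" "n \<ge> 2"
  shows "0 \<le> Fv n v"
  using cyc_bounds[OF assms] unfolding Fv_def by auto

lemma lower_step:
  assumes "w permutes {1..n}" "n \<ge> 2" "1 \<le> i" "i < j" "j \<le> n"
  shows "Fv n (transpose 1 2 \<circ> transpose i j \<circ> w) \<le> Fv n w + 1"
proof -
  let ?S = "{1..n}"
  have fin: "finite ?S" by simp
  have s: "(1::nat) \<in> ?S" "(2::nat) \<in> ?S" "i \<in> ?S" "j \<in> ?S" using assms by auto
  define w' where "w' = transpose i j \<circ> w"
  have w'S: "w' permutes ?S" unfolding w'_def using assms(1) s by (simp add: permutes_compose permutes_swap_id)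
  have eq: "transpose 1 2 \<circ> transpose i j \<circ> w = transpose 1 2 \<circ> w'" by (simp add: w'_def o_assoc)
  note t1 = trans_step[OF assms(1) fin s(3,4), folded w'_def]
  note t2 = trans_step[OF w'S fin s(1,2)]
  have ij: "i \<noteq> j" using assms by simp
  show ?thesis unfolding eq unfolding Fv_def cyc_def
    using t1[OF ij] t2 by (elim disjE conjE) (auto split: if_splits)
qed

lemma upper_step:
  assumes vS: "v permutes {1..n}" and n2: "n \<ge> 2" and ev: "evenperm v" and vid: "v \<noteq> id"
  shows "\<exists>i j w. 1 \<le> i \<and> i < j \<and> j \<le> n \<and> w permutes {1..n} \<and> evenperm w
           \<and> v = transpose 1 2 \<circ> transpose i j \<circ> w \<and> Fv n w + 1 = Fv n v"
proof -
  let ?S = "{1..n}"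
  have fin: "finite ?S" by simp
  have s: "(1::nat) \<in> ?S" "(2::nat) \<in> ?S" using n2 by auto
  define w' where "w' = transpose 1 2 \<circ> v"
  have w'S: "w' permutes ?S" unfolding w'_def using vS s by (simp add: permutes_compose permutes_swap_id)
  have vw: "v = transpose 1 2 \<circ> w'" by (simp add: w'_def o_assoc)
  have pv: "permutation v" using vS fin permutation_permutes by blast
  have pw': "permutation w'" using w'S fin permutation_permutes by blast
  have ew': "\<not> evenperm w'" unfolding w'_def using ev pv
    by (simp add: evenperm_comp permutation_swap_id evenperm_swap)
  note t0 = trans_step[OF vS fin s, folded w'_def]
  have key: "\<exists>x. x \<in> ?S \<and> w' x \<noteq> x \<and> Fv n (transpose x (w' x) \<circ> w') + 1 = Fv n v"
  proof (cases "(2::nat) \<in> orbit v 1")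
    case True
    with t0 have c1: "card (orbit w' ` ?S) = card (orbit v ` ?S) + 1" and r1: "2 \<notin> orbit w' 1" by auto
    have "w' \<noteq> id"
    proof
      assume "w' = id"
      then have "v = transpose 1 2" using vw by simp
      then show False using ev by (simp add: evenperm_swap)
    qed
    then obtain x where x: "w' x \<noteq> x" by (metis eq_id_iff)
    have xS: "x \<in> ?S" using x permutes_not_in[OF w'S] by blast
    have yS: "w' x \<in> ?S" using xS permutes_in_image[OF w'S] by blast
    have yo: "w' x \<in> orbit w' x" by (rule orbit.base)
    note t = trans_step[OF w'S fin xS yS x[symmetric]]
    with yo have c2: "card (orbit (transpose x (w' x) \<circ> w') ` ?S) = card (orbit w' ` ?S) + 1"
      and m: "\<forall>y. orbit (transpose x (w' x) \<circ> w') y \<subseteq> orbit w' y" by auto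
    have "2 \<notin> orbit (transpose x (w' x) \<circ> w') 1" using m r1 by blast
    then have "Fv n (transpose x (w' x) \<circ> w') + 1 = Fv n v"
      unfolding Fv_def cyc_def using c1 c2 True by simp
    then show ?thesis using xS x by blast
  next
    case False
    with t0 have c1: "card (orbit w' ` ?S) + 1 = card (orbit v ` ?S)" and r1: "(2::nat) \<in> orbit w' 1" by auto
    have inj: "inj w'" using permutes_inj[OF w'S] .
    have "\<exists>x. x \<in> ?S \<and> x \<noteq> 1 \<and> x \<noteq> 2 \<and> w' x \<noteq> x"
    proof (rule ccontr)
      assume "\<not> ?thesis"
      then have fx: "\<And>x. x \<noteq> 1 \<Longrightarrow> x \<noteq> 2 \<Longrightarrow> w' x = x" using permutes_not_in[OF w'S] by blast
      have a1: "w' 1 \<noteq> 1"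
      proof
        assume "w' 1 = 1"
        then have "orbit w' 1 = {1}" by (simp add: orbit_eq_singleton_iff)
        then show False using r1 by simp
      qed
      have a2: "w' 1 = 2"
      proof (rule ccontr)
        assume "w' 1 \<noteq> 2"
        then have "w' (w' 1) = w' 1" using fx a1 by blast
        then have "w' 1 = 1" using inj by (simp add: inj_eq)
        then show False using a1 by simp
      qed
      have b1: "w' 2 \<noteq> 2" using a2 inj by (metis inj_eq one_neq_zero numeral_One numeral_eq_iff semiring_norm(86) num.distinct(1))
      have b2: "w' 2 = 1"
      proof (rule ccontr)
        assume "w' 2 \<noteq> 1"
        then have "w' (w' 2) = w' 2" using fx b1 by blast
        then have "w' 2 = 2" using inj by (simp add: inj_eq)
        then show False using b1 by simp
      qed
      have "w' = transpose 1 2"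
      proof
        fix z show "w' z = transpose 1 2 z"
          using a2 b2 fx[of z] by (cases "z = 1"; cases "z = 2") auto
      qed
      then have "v = id" using vw by simp
      then show False using vid by simp
    qed
    then obtain x where xS: "x \<in> ?S" and x1: "x \<noteq> 1" and x2: "x \<noteq> 2" and x: "w' x \<noteq> x" by blast
    define y where "y = w' x"
    define w where "w = transpose x y \<circ> w'"
    have yS: "y \<in> ?S" using xS permutes_in_image[OF w'S] y_def by blast
    have yo: "y \<in> orbit w' x" unfolding y_def by (rule orbit.base)
    have xy: "x \<noteq> y" using x y_def by simp
    note t = trans_step[OF w'S fin xS yS xy, folded w_def]
    with yo have c2: "card (orbit w ` ?S) = card (orbit w' ` ?S) + 1"
      and sep: "y \<notin> orbit w x" by auto
    have wS: "w permutes ?S" unfolding w_def using w'S xS yS by (simp add: permutes_compose permutes_swap_id)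
    have pw: "permutation w" using wS fin permutation_permutes by blast
    have wb: "transpose x y \<circ> w = w'" by (simp add: w_def o_assoc)
    have wx: "w x = x" by (simp add: w_def y_def)
    have ox: "orbit w x = {x}" using wx by (simp add: orbit_eq_singleton_iff)
    note mo = merge_orbit[OF pw xy sep, unfolded wb]
    have r2: "(2::nat) \<in> orbit w 1"
    proof (cases "(1::nat) \<in> orbit w x \<union> orbit w y")
      case True
      then have o1: "1 \<in> orbit w y" using ox x1 by auto
      have "2 \<in> orbit w x \<union> orbit w y" using mo[of 1] True r1 by simp
      then have "2 \<in> orbit w y" using ox x2 by auto
      then show ?thesis using orb_eq[OF pw o1] by simp
    next
      case False
      then show ?thesis using mo[of 1] r1 by simp
    qed
    have "Fv n w + 1 = Fv n v"
      unfolding Fv_def cyc_def using c1 c2 False r2 by simp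
    then show ?thesis using xS x unfolding w_def y_def by blast
  qed
  then obtain x where xS: "x \<in> ?S" and x: "w' x \<noteq> x"
    and F: "Fv n (transpose x (w' x) \<circ> w') + 1 = Fv n v" by blast
  define w where "w = transpose x (w' x) \<circ> w'"
  have yS: "w' x \<in> ?S" using xS permutes_in_image[OF w'S] by blast
  have wS: "w permutes ?S" unfolding w_def using w'S xS yS by (simp add: permutes_compose permutes_swap_id)
  have ew: "evenperm w" unfolding w_def using ew' pw' x
    by (simp add: evenperm_comp permutation_swap_id evenperm_swap)
  define i where "i = min x (w' x)"
  define j where "j = max x (w' x)"
  have tij: "transpose i j = transpose x (w' x)"
    unfolding i_def j_def by (cases "x \<le> w' x") (auto simp: min_def max_def transpose_commute)
  have h: "transpose x (w' x) \<circ> (transpose x (w' x) \<circ> w') = w'" by (simp add: o_assoc)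
  have vv: "v = transpose 1 2 \<circ> transpose i j \<circ> w"
    unfolding tij w_def vw by (simp add: comp_assoc h)
  have ij: "1 \<le> i" "i < j" "j \<le> n" using xS yS x unfolding i_def j_def by auto
  show ?thesis using ij wS ew vv F unfolding w_def[symmetric] by blast
qed

lemma lower_list:
  assumes n2: "n \<ge> 2"
  shows "set ts \<subseteq> T_alt n \<Longrightarrow> foldr (\<circ>) ts id permutes {1..n} \<and> Fv n (foldr (\<circ>) ts id) \<le> int (length ts)"
proof (induct ts)
  case Nil
  have "foldr (\<circ>) [] id = (id :: nat \<Rightarrow> nat)" by simp then show ?case using F_id[of n] permutes_id[of "{1..n}"] by (simp only: list.size of_nat_0 order_refl)
next
  case (Cons t ts)
  have st: "set ts \<subseteq> T_alt n" using Cons.prems by simp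
  note IH = conjunct1[OF Cons.hyps[OF st]] conjunct2[OF Cons.hyps[OF st]]
  from Cons.prems obtain i j where t: "t = transpose 1 2 \<circ> transpose i j" and ij: "1 \<le> i" "i < j" "j \<le> n"
    unfolding T_alt_def by auto
  have s: "(1::nat) \<in> {1..n}" "(2::nat) \<in> {1..n}" "i \<in> {1..n}" "j \<in> {1..n}" using n2 ij by auto
  have eq: "foldr (\<circ>) (t # ts) id = transpose 1 2 \<circ> transpose i j \<circ> foldr (\<circ>) ts id" using t by simp
  have A: "transpose 1 2 \<circ> transpose i j \<circ> foldr (\<circ>) ts id permutes {1..n}"
    by (rule permutes_compose[OF IH(1) permutes_compose[OF permutes_swap_id[OF s(3,4)] permutes_swap_id[OF s(1,2)]]])
  have B: "Fv n (transpose 1 2 \<circ> transpose i j \<circ> foldr (\<circ>) ts id) \<le> Fv n (foldr (\<circ>) ts id) + 1"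
    using lower_step[OF IH(1) n2 ij] .
  show ?case unfolding eq length_Cons of_nat_Suc
    apply (rule conjI)
     apply (rule A)
    using B IH(2) by linarith
qed

lemma upper:
  assumes n2: "n \<ge> 2"
  shows "\<forall>v. v permutes {1..n} \<and> evenperm v \<and> Fv n v = int k \<longrightarrow>
          (\<exists>ts. length ts = k \<and> set ts \<subseteq> T_alt n \<and> v = foldr (\<circ>) ts id)"
proof (induct k)
  case 0
  show ?case
  proof (intro allI impI)
    fix v assume a: "v permutes {1..n} \<and> evenperm v \<and> Fv n v = int 0"
    have "v = id"
    proof (rule ccontr)
      assume "v \<noteq> id"
      then obtain i j w where "w permutes {1..n}" "Fv n w + 1 = Fv n v"
        using upper_step[of v n] a n2 by blast
      then show False using F_nonneg[of w n] n2 a by simp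
    qed
    then show "\<exists>ts. length ts = 0 \<and> set ts \<subseteq> T_alt n \<and> v = foldr (\<circ>) ts id" by simp
  qed
next
  case (Suc k)
  show ?case
  proof (intro allI impI)
    fix v assume a: "v permutes {1..n} \<and> evenperm v \<and> Fv n v = int (Suc k)"
    have "v \<noteq> id" using a F_id by auto
    then obtain i j w where w: "1 \<le> i" "i < j" "j \<le> n" "w permutes {1..n}" "evenperm w"
       "v = transpose 1 2 \<circ> transpose i j \<circ> w" "Fv n w + 1 = Fv n v"
      using upper_step[of v n] a n2 by blast
    then have "Fv n w = int k" using a by simp
    then obtain ts where ts: "length ts = k" "set ts \<subseteq> T_alt n" "w = foldr (\<circ>) ts id"
      using Suc w by blast
    have "transpose 1 2 \<circ> transpose i j \<in> T_alt n" unfolding T_alt_def using w by blast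
    then show "\<exists>ts. length ts = Suc k \<and> set ts \<subseteq> T_alt n \<and> v = foldr (\<circ>) ts id"
      using ts w by (intro exI[of _ "(transpose 1 2 \<circ> transpose i j) # ts"]) auto
  qed
qed

theorem corollary6p4:
  fixes n :: nat and v :: "nat \<Rightarrow> nat"
  assumes "n \<ge> 2" and "v \<in> alt_group n"
  shows "len_T n v = (if (2::nat) \<in> orbit v 1 then n - cyc n v - 1 else n - cyc n v)"
proof -
  have vS: "v permutes {1..n}" and ev: "evenperm v" using assms(2) unfolding alt_group_def by auto
  have F0: "0 \<le> Fv n v" using F_nonneg[OF vS assms(1)] .
  have len: "len_T n v = nat (Fv n v)"
    unfolding len_T_def
  proof (rule Least_equality)
    show "\<exists>ts. length ts = nat (Fv n v) \<and> set ts \<subseteq> T_alt n \<and> v = foldr (\<circ>) ts id"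
      using upper[OF assms(1), of "nat (Fv n v)"] vS ev F0 by simp
  next
    fix k assume "\<exists>ts. length ts = k \<and> set ts \<subseteq> T_alt n \<and> v = foldr (\<circ>) ts id"
    then obtain ts where "length ts = k" "set ts \<subseteq> T_alt n" "v = foldr (\<circ>) ts id" by blast
    then show "nat (Fv n v) \<le> k" using lower_list[OF assms(1), of ts] by auto
  qed
  show ?thesis unfolding len Fv_def using cyc_bounds[OF vS assms(1)] by auto
qed

end
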